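(* Let $\beta>0$, $\mu\in(0,1/4]$, let $d,\ell\in\mathbb{N}$, let $W$ be a real $2d\times\ell$ matrix and let $\tau\sim\mathcal{Q}(2d,\mu)$. Then for all $t\ge0$, \[\gamma_\ell(S_W(t))\,e^{-32\mu t}\le\mathbb{P}_\tau\big(\|W^T\tau\|_2\le\beta\sqrt{\ell}\big)+\exp(-\beta^2\ell).\]
   Context: For $\mu\in(0,1)$ and $m\in\mathbb{N}$, $\tau\sim\mathcal{Q}(m,\mu)$ denotes a random vector in $\{-1,0,1\}^m$ with independent entries satisfying $\mathbb{P}(\tau_i=1)=\mathbb{P}(\tau_i=-1)=\mu/2$ and $\mathbb{P}(\tau_i=0)=1-\mu$. $\gamma_\ell$ denotes the Gaussian measure on $\mathbb{R}^\ell$ with $\gamma_\ell(S)=\mathbb{P}(g\in S)$ where $g\sim\mathcal{N}(0,(2\pi)^{-1}I_\ell)$. For $u\in\mathbb{R}^m$, $\|u\|_{\mathbb{T}}$ denotes the Euclidean distance from $u$ to $\mathbb{Z}^m$. For a $2d\times\ell$ matrix $W$ and $t\ge0$, $S_W(t):=\{\theta\in\mathbb{R}^\ell:\|W\theta\|_{\mathbb{T}}\le\sqrt t\}$. *)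

theory Defs
  imports "HOL-Probability.Probability"
begin

text \<open>Vectors in R^m are functions nat => real, only indices < m matter.
  Matrices are functions nat => nat => real (row, column).\<close>

text \<open>Single-coordinate law of Q(m,mu): P(1)=P(-1)=mu/2, P(0)=1-mu.\<close>
definition Q_coord :: "real \<Rightarrow> real pmf" where
  "Q_coord \<mu> = do { b \<leftarrow> bernoulli_pmf \<mu>; s \<leftarrow> bernoulli_pmf (1/2);
                     return_pmf (if b then (if s then 1 else -1) else 0) }"

definition Q_dist :: "nat \<Rightarrow> real \<Rightarrow> (nat \<Rightarrow> real) pmf" where
  "Q_dist m \<mu> = Pi_pmf {..<m} 0 (\<lambda>_. Q_coord \<mu>)"

text \<open>Gaussian measure gamma_l: law of g ~ N(0, (2 pi)^(-1) I_l), i.e. l iid centred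
  normals of variance 1/(2 pi) (standard deviation 1/sqrt(2 pi)).\<close>
definition gauss_measure :: "nat \<Rightarrow> (nat \<Rightarrow> real) measure" where
  "gauss_measure l = PiM {..<l} (\<lambda>_. density lborel (normal_density 0 (1 / sqrt (2 * pi))))"

definition torus_norm :: "nat \<Rightarrow> (nat \<Rightarrow> real) \<Rightarrow> real" where
  "torus_norm m u = Inf {sqrt (\<Sum>i<m. (u i - real_of_int (z i))\<^sup>2) | z :: nat \<Rightarrow> int. True}"

definition mat_vec :: "nat \<Rightarrow> nat \<Rightarrow> (nat \<Rightarrow> nat \<Rightarrow> real) \<Rightarrow> (nat \<Rightarrow> real) \<Rightarrow> (nat \<Rightarrow> real)" where
  "mat_vec m n A x = (\<lambda>i. \<Sum>j<n. A i j * x j)"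

definition transp_mat :: "(nat \<Rightarrow> nat \<Rightarrow> real) \<Rightarrow> (nat \<Rightarrow> nat \<Rightarrow> real)" where
  "transp_mat A = (\<lambda>i j. A j i)"

definition euclid_norm :: "nat \<Rightarrow> (nat \<Rightarrow> real) \<Rightarrow> real" where
  "euclid_norm n x = sqrt (\<Sum>i<n. (x i)\<^sup>2)"

definition S_set :: "nat \<Rightarrow> nat \<Rightarrow> (nat \<Rightarrow> nat \<Rightarrow> real) \<Rightarrow> real \<Rightarrow> (nat \<Rightarrow> real) set" where
  "S_set d l W t = {\<theta> \<in> space (gauss_measure l). torus_norm (2*d) (mat_vec (2*d) l W \<theta>) \<le> sqrt t}"

end

theory Submission
  imports Defs
begin


definition phi :: "real \<Rightarrow> real \<Rightarrow> real" where
  "phi \<mu> x = 1 - \<mu> + \<mu> * cos (2 * pi * x)"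

lemma one_minus_ge_exp:
  fixes a :: real assumes "0 \<le> a" "a \<le> 1/2"
  shows "exp (- 2 * ln 2 * a) \<le> 1 - a"
proof -
  define u where "u = 2 * a"
  have u: "0 \<le> u" "u \<le> 1" using assms by (auto simp: u_def)
  have "exp (u * (- ln 2) + (1 - u) * 0) \<le> u * exp (- ln 2) + (1 - u) * exp 0"
    using convex_onD[OF exp_convex, of u 0 "- ln 2"] u by (simp add: algebra_simps)
  also have "exp (- ln (2::real)) = 1/2" by (simp add: exp_minus)
  finally show ?thesis by (simp add: u_def mult_ac)
qed

lemma ln2_le: "ln (2::real) \<le> 3/4"
proof -
  have "(2::real) \<le> 1 + 3/4 + (3/4)\<^sup>2/2" by (simp add: power2_eq_square)
  also have "\<dots> \<le> exp (3/4)" by (rule exp_lower_Taylor_quadratic) simp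
  finally have "ln (2::real) \<le> ln (exp (3/4))" by (subst ln_le_cancel_iff) auto
  thus ?thesis by simp
qed

lemma phi_lower:
  assumes "0 < \<mu>" "\<mu> \<le> 1/4"
  shows "exp (- 32 * \<mu> * x\<^sup>2) \<le> phi \<mu> x"
proof -
  define a where "a = 2 * \<mu> * (sin (pi * x))\<^sup>2"
  have s1: "(sin (pi * x))\<^sup>2 \<le> 1" by (simp add: abs_square_le_1)
  have "\<mu> * (sin (pi * x))\<^sup>2 \<le> \<mu> * 1" using s1 assms by (intro mult_left_mono) auto
  moreover have "0 \<le> \<mu> * (sin (pi * x))\<^sup>2" using assms by simp
  ultimately have a: "0 \<le> a" "a \<le> 1/2" using assms unfolding a_def by linarith+
  have "phi \<mu> x = 1 - a"
    proof -
    have c: "cos (2 * pi * x) = 1 - 2 * (sin (pi * x))\<^sup>2" using cos_double_sin[of "pi * x"] by (simp add: mult.assoc)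
    show ?thesis unfolding phi_def c a_def by (simp add: algebra_simps)
  qed
  have sx: "(sin (pi * x))\<^sup>2 \<le> (pi * x)\<^sup>2"
    using abs_sin_x_le_abs_x[of "pi * x"] by (metis abs_ge_zero power2_abs power_mono)
  have pi2: "pi\<^sup>2 \<le> (3.1416::real)^2"
    using pi_approx by (intro power_mono) auto
  have "- 32 * \<mu> * x\<^sup>2 \<le> - 2 * ln 2 * a"
  proof -
    have "2 * ln 2 * a \<le> 2 * (3/4) * a" using ln2_le a by (intro mult_right_mono) auto
    also have "\<dots> \<le> 3 * \<mu> * (pi * x)\<^sup>2" unfolding a_def using sx assms by simp
    also have "\<dots> \<le> 3 * \<mu> * ((3.1416)^2 * x\<^sup>2)" using pi2 assms
      by (auto simp: power_mult_distrib intro!: mult_right_mono)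
    also have "\<dots> = 3 * (3.1416)^2 * (\<mu> * x\<^sup>2)" by simp
    also have "\<dots> \<le> 32 * (\<mu> * x\<^sup>2)" using assms by (intro mult_right_mono) (auto simp: power2_eq_square)
    also have "\<dots> = 32 * \<mu> * x\<^sup>2" by simp
    finally show ?thesis by simp
  qed
  hence "exp (- 32 * \<mu> * x\<^sup>2) \<le> exp (- 2 * ln 2 * a)" by simp
  also have "\<dots> \<le> 1 - a" by (rule one_minus_ge_exp[OF a])
  finally show ?thesis using \<open>phi \<mu> x = 1 - a\<close> by simp
qed

lemma phi_periodic: "phi \<mu> (x - real_of_int k) = phi \<mu> x"
  proof -
  have "cos (2 * pi * (x - real_of_int k)) = cos (2 * pi * x)"
    unfolding right_diff_distrib cos_diff by simp
  thus ?thesis unfolding phi_def by simp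
qed

lemma phi_pos: "0 < \<mu> \<Longrightarrow> \<mu> \<le> 1/4 \<Longrightarrow> 0 < phi \<mu> x"
proof -
  assume a: "0 < \<mu>" "\<mu> \<le> 1/4"
  have "\<mu> * (-1) \<le> \<mu> * cos (2*pi*x)" using a by (intro mult_left_mono) auto
  thus ?thesis unfolding phi_def using a by auto
qed

lemma phi_le1: "0 < \<mu> \<Longrightarrow> phi \<mu> x \<le> 1"
proof -
  assume a: "0 < \<mu>"
  have "\<mu> * cos (2*pi*x) \<le> \<mu> * 1" using a by (intro mult_left_mono) auto
  thus ?thesis unfolding phi_def using a by auto
qed



lemma integral_pair_pmf_finite:
  fixes f :: "'a \<times> 'b \<Rightarrow> complex"
  assumes A: "finite (set_pmf A)" and B: "finite (set_pmf B)"
  shows "(\<integral>z. f z \<partial>pair_pmf A B) = (\<integral>a. (\<integral>b. f (a,b) \<partial>B) \<partial>A)"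
proof -
  have "(\<integral>z. f z \<partial>pair_pmf A B) = (\<Sum>z\<in>set_pmf A \<times> set_pmf B. pmf (pair_pmf A B) z *\<^sub>R f z)"
    using A B by (intro integral_measure_pmf) auto
  also have "\<dots> = (\<Sum>a\<in>set_pmf A. \<Sum>b\<in>set_pmf B. (pmf A a * pmf B b) *\<^sub>R f (a,b))"
    by (subst sum.cartesian_product) (auto intro!: sum.cong simp: pmf_pair)
  also have "\<dots> = (\<Sum>a\<in>set_pmf A. pmf A a *\<^sub>R (\<Sum>b\<in>set_pmf B. pmf B b *\<^sub>R f (a,b)))"
    by (simp add: scaleR_sum_right)
  also have "\<dots> = (\<Sum>a\<in>set_pmf A. pmf A a *\<^sub>R (\<integral>b. f (a,b) \<partial>B))"
    using B by (intro sum.cong refl arg_cong2[where f="(*\<^sub>R)"] integral_measure_pmf[symmetric]) auto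
  also have "\<dots> = (\<integral>a. (\<integral>b. f (a,b) \<partial>B) \<partial>A)"
    using A by (intro integral_measure_pmf[symmetric]) auto
  finally show ?thesis .
qed

lemma finite_set_Pi_pmf:
  assumes "finite A" "\<And>x. x \<in> A \<Longrightarrow> finite (set_pmf (p x))"
  shows "finite (set_pmf (Pi_pmf A dflt p))"
  using assms by (intro finite_subset[OF set_Pi_pmf_subset'] finite_PiE_dflt) auto

lemma expectation_prod_Pi_pmf_complex:
  fixes f :: "'a \<Rightarrow> 'b \<Rightarrow> complex"
  assumes "finite A" "\<And>x. x \<in> A \<Longrightarrow> finite (set_pmf (p x))"
  shows "(\<integral>y. (\<Prod>x\<in>A. f x (y x)) \<partial>Pi_pmf A dflt p) = (\<Prod>x\<in>A. (\<integral>v. f x v \<partial>p x))"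
  using assms
proof (induction A rule: finite_induct)
  case empty
  then show ?case by simp
next
  case (insert x A)
  have fin1: "finite (set_pmf (p x))" using insert by auto
  have fin2: "finite (set_pmf (Pi_pmf A dflt p))" using insert by (intro finite_set_Pi_pmf) auto
  have "(\<integral>y. (\<Prod>z\<in>insert x A. f z (y z)) \<partial>Pi_pmf (insert x A) dflt p)
      = (\<integral>ab. (\<Prod>z\<in>insert x A. f z (fun_upd (snd ab) x (fst ab) z)) \<partial>pair_pmf (p x) (Pi_pmf A dflt p))"
    using insert by (simp add: Pi_pmf_insert case_prod_unfold)
  also have "\<dots> = (\<integral>a. (\<integral>b. (\<Prod>z\<in>insert x A. f z (fun_upd b x a z)) \<partial>Pi_pmf A dflt p) \<partial>p x)"
    by (subst integral_pair_pmf_finite[OF fin1 fin2]) simp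
  also have "\<dots> = (\<integral>a. (\<integral>b. f x a * (\<Prod>z\<in>A. f z (b z)) \<partial>Pi_pmf A dflt p) \<partial>p x)"
  proof (intro Bochner_Integration.integral_cong refl)
    fix a b
    have "(\<Prod>z\<in>A. f z (fun_upd b x a z)) = (\<Prod>z\<in>A. f z (b z))"
      using insert.hyps by (intro prod.cong) auto
    thus "(\<Prod>z\<in>insert x A. f z (fun_upd b x a z)) = f x a * (\<Prod>z\<in>A. f z (b z))"
      using insert.hyps by simp
  qed
  also have "\<dots> = (\<integral>a. f x a * (\<integral>b. (\<Prod>z\<in>A. f z (b z)) \<partial>Pi_pmf A dflt p) \<partial>p x)"
    by simp
  also have "\<dots> = (\<integral>a. f x a \<partial>p x) * (\<integral>b. (\<Prod>z\<in>A. f z (b z)) \<partial>Pi_pmf A dflt p)"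
    by simp
  also have "\<dots> = (\<Prod>z\<in>insert x A. (\<integral>v. f z v \<partial>p z))"
    using insert by simp
  finally show ?case .
qed

lemma Q_coord_alt: "Q_coord \<mu> = map_pmf (\<lambda>(b,s). if b then (if s then 1 else -1) else (0::real))
   (pair_pmf (bernoulli_pmf \<mu>) (bernoulli_pmf (1/2)))"
  unfolding Q_coord_def pair_pmf_def map_bind_pmf map_return_pmf by simp

lemma finite_set_Q_coord: "finite (set_pmf (Q_coord \<mu>))"
  unfolding Q_coord_alt by simp

lemma integral_bernoulli_complex:
  fixes f :: "bool \<Rightarrow> complex"
  assumes "0 \<le> p" "p \<le> 1"
  shows "(\<integral>x. f x \<partial>bernoulli_pmf p) = of_real p * f True + of_real (1 - p) * f False"
  using assms by (subst integral_measure_pmf[of UNIV]) (auto simp: UNIV_bool scaleR_conv_of_real)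

lemma Q_coord_char:
  assumes "0 \<le> \<mu>" "\<mu> \<le> 1"
  shows "(\<integral>x. iexp (c * x) \<partial>Q_coord \<mu>) = complex_of_real (1 - \<mu> + \<mu> * cos c)"
proof -
  have "(\<integral>x. iexp (c * x) \<partial>Q_coord \<mu>) =
     (\<integral>a. (\<integral>b. iexp (c * (if fst (a,b) then (if snd (a,b) then 1 else -1) else 0)) \<partial>bernoulli_pmf (1/2)) \<partial>bernoulli_pmf \<mu>)"
    unfolding Q_coord_alt integral_map_pmf
    by (subst integral_pair_pmf_finite) (auto simp: case_prod_unfold)
  also have "\<dots> = of_real \<mu> * ((iexp c + iexp (- c)) / 2) + of_real (1 - \<mu>)"
    using assms by (simp add: integral_bernoulli_complex algebra_simps)
  also have "iexp c + iexp (- c) = 2 * complex_of_real (cos c)"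
    by (simp add: cos_exp_eq flip: cos_of_real)
  finally show ?thesis by (simp add: algebra_simps)
qed



lemma gauss1_char:
  fixes \<sigma> :: real assumes "0 < \<sigma>"
  shows "(\<integral>x. iexp (a * x) \<partial>density lborel (normal_density 0 \<sigma>)) = complex_of_real (exp (- (a * \<sigma>)\<^sup>2 / 2))"
proof -
  interpret N: prob_space std_normal_distribution by (rule prob_space_normal_density) simp
  have d: "distributed std_normal_distribution lborel (\<lambda>x. x) std_normal_density"
    unfolding distributed_def by (auto simp: distr_id2)
  have d2: "distributed std_normal_distribution lborel (\<lambda>x. 0 + \<sigma> * x) (normal_density (0 + \<sigma> * 0) (\<bar>\<sigma>\<bar> * 1))"
    by (rule N.normal_density_affine[OF d]) (use assms in auto)
  hence "distr std_normal_distribution lborel (\<lambda>x. \<sigma> * x) = density lborel (normal_density 0 \<sigma>)"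
    using assms unfolding distributed_def by simp
  hence "(\<integral>x. iexp (a * x) \<partial>density lborel (normal_density 0 \<sigma>)) =
        (\<integral>x. iexp (a * x) \<partial>distr std_normal_distribution lborel (\<lambda>x. \<sigma> * x))" by simp
  also have "\<dots> = (\<integral>x. iexp (a * (\<sigma> * x)) \<partial>std_normal_distribution)"
    by (subst integral_distr) auto
  also have "\<dots> = char std_normal_distribution (a * \<sigma>)"
    unfolding char_def by (simp add: mult.assoc)
  also have "\<dots> = complex_of_real (exp (- (a * \<sigma>)\<^sup>2 / 2))"
    by (simp add: char_std_normal_distribution)
  finally show ?thesis .
qed

definition gsig :: real where "gsig = 1 / sqrt (2 * pi)"

lemma gsig_pos: "0 < gsig" unfolding gsig_def by simp

lemma gsig_sq: "(2 * pi * gsig)\<^sup>2 / 2 = pi"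
  unfolding gsig_def by (simp add: power2_eq_square field_simps)

lemma gauss_char:
  "(\<integral>\<theta>. (\<Prod>j<l. iexp (2 * pi * v j * \<theta> j)) \<partial>gauss_measure l)
     = complex_of_real (exp (- pi * (\<Sum>j<l. (v j)\<^sup>2)))"
proof -
  define N where "N = density lborel (normal_density 0 (1 / sqrt (2 * pi)))"
  interpret N: prob_space N unfolding N_def by (rule prob_space_normal_density) simp
  interpret PS: product_sigma_finite "\<lambda>_::nat. N"
    by unfold_locales
  have mN: "(\<lambda>x. iexp (c * x)) \<in> borel_measurable N" for c
  proof -
    have "(\<lambda>x. iexp (c * x)) \<in> borel_measurable borel"
      by (intro borel_measurable_continuous_onI continuous_intros)
    thus ?thesis unfolding N_def by simp
  qed
  have "(\<integral>\<theta>. (\<Prod>j<l. iexp (2 * pi * v j * \<theta> j)) \<partial>gauss_measure l)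
      = (\<Prod>j<l. (\<integral>x. iexp (2 * pi * v j * x) \<partial>N))"
    unfolding gauss_measure_def N_def[symmetric]
    by (rule PS.product_integral_prod[where f="\<lambda>j x. iexp (2 * pi * v j * x)"])
       (auto intro!: N.integrable_const_bound[where B=1] mN[of "2 * pi * v _", simplified])
  also have "\<dots> = (\<Prod>j<l. complex_of_real (exp (- pi * (v j)\<^sup>2)))"
  proof (intro prod.cong refl)
    fix j
    have "(\<integral>x. iexp (2 * pi * v j * x) \<partial>N) = complex_of_real (exp (- (2 * pi * v j * gsig)\<^sup>2 / 2))"
      unfolding N_def gsig_def[symmetric] by (rule gauss1_char[OF gsig_pos])
    moreover have "(2 * pi * v j * gsig)\<^sup>2 / 2 = pi * (v j)\<^sup>2"
    proof -
      have "(2 * pi * v j * gsig)\<^sup>2 / 2 = ((2 * pi * gsig)\<^sup>2 / 2) * (v j)\<^sup>2"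
        by (simp add: power_mult_distrib field_simps)
      thus ?thesis using gsig_sq by simp
    qed
    ultimately show "(\<integral>x. iexp (2 * pi * v j * x) \<partial>N) = complex_of_real (exp (- pi * (v j)\<^sup>2))" by simp
  qed
  also have "\<dots> = complex_of_real (exp (- pi * (\<Sum>j<l. (v j)\<^sup>2)))"
    by (simp add: exp_sum sum_distrib_left flip: of_real_prod)
  finally show ?thesis .
qed

lemma gauss_integrable:
  "integrable (gauss_measure l) (\<lambda>\<theta>. (\<Prod>j<l. iexp (c j * \<theta> j)))"
proof -
  define N where "N = density lborel (normal_density 0 (1 / sqrt (2 * pi)))"
  interpret N: prob_space N unfolding N_def by (rule prob_space_normal_density) simp
  interpret PS: product_sigma_finite "\<lambda>_::nat. N"
    by unfold_locales
  have mN: "(\<lambda>x. iexp (c * x)) \<in> borel_measurable N" for c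
  proof -
    have "(\<lambda>x. iexp (c * x)) \<in> borel_measurable borel"
      by (intro borel_measurable_continuous_onI continuous_intros)
    thus ?thesis unfolding N_def by simp
  qed
  show ?thesis
    unfolding gauss_measure_def N_def[symmetric]
    by (rule PS.product_integrable_prod[where f="\<lambda>j x. iexp (c j * x)"])
       (auto intro!: N.integrable_const_bound[where B=1] mN[of "c _", simplified])
qed



lemma prod_iexp_sum:
  fixes a :: "'i \<Rightarrow> real" assumes "finite I"
  shows "(\<Prod>i\<in>I. iexp (a i)) = iexp (\<Sum>i\<in>I. a i)"
  using assms by (simp add: exp_sum[symmetric] sum_distrib_left)

lemma torus_lower:
  assumes "0 < \<mu>" "\<mu> \<le> 1/4" "torus_norm m u \<le> sqrt t"
  shows "exp (- 32 * \<mu> * t) \<le> (\<Prod>i<m. phi \<mu> (u i))"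
proof -
  define P where "P = (\<Prod>i<m. phi \<mu> (u i))"
  have Ppos: "0 < P" unfolding P_def using assms by (intro prod_pos phi_pos) auto
  have Ple: "P \<le> 1" unfolding P_def using assms
    by (intro prod_le_1 conjI less_imp_le[OF phi_pos] phi_le1) auto
  define c where "c = - ln P / (32 * \<mu>)"
  have "ln P \<le> 0" using Ppos Ple by simp
  hence c0: "0 \<le> c" unfolding c_def using assms by (intro divide_nonneg_pos) auto
  have bound: "sqrt c \<le> sqrt (\<Sum>i<m. (u i - real_of_int (z i))\<^sup>2)" for z :: "nat \<Rightarrow> int"
  proof -
    define D where "D = (\<Sum>i<m. (u i - real_of_int (z i))\<^sup>2)"
    have "P = (\<Prod>i<m. phi \<mu> (u i - real_of_int (z i)))"
      unfolding P_def by (simp add: phi_periodic)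
    also have "\<dots> \<ge> (\<Prod>i<m. exp (- 32 * \<mu> * (u i - real_of_int (z i))\<^sup>2))"
      using assms by (intro prod_mono conjI phi_lower) auto
    also have "(\<Prod>i<m. exp (- 32 * \<mu> * (u i - real_of_int (z i))\<^sup>2)) = exp (- 32 * \<mu> * D)"
      unfolding D_def by (simp add: exp_sum[symmetric] sum_distrib_left)
    finally have "exp (- 32 * \<mu> * D) \<le> P" .
    hence "- 32 * \<mu> * D \<le> ln P" using Ppos by (simp add: ln_ge_iff)
    hence "c \<le> D" unfolding c_def using assms by (simp add: field_simps)
    thus ?thesis unfolding D_def by simp
  qed
  have "sqrt c \<le> torus_norm m u"
    unfolding torus_norm_def by (rule cInf_greatest) (use bound in auto)
  hence "sqrt c \<le> sqrt t" using assms(3) by (rule order_trans)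
  hence "c \<le> t" by simp
  hence "- 32 * \<mu> * t \<le> ln P" unfolding c_def using assms by (simp add: field_simps)
  hence "exp (- 32 * \<mu> * t) \<le> exp (ln P)" by simp
  thus ?thesis using Ppos unfolding P_def by simp
qed



lemma finite_set_Q_dist: "finite (set_pmf (Q_dist m \<mu>))"
  unfolding Q_dist_def by (intro finite_set_Pi_pmf finite_set_Q_coord) auto

lemma key_swap_sum:
  fixes W :: "nat \<Rightarrow> nat \<Rightarrow> real"
  shows "(\<Sum>j<l. mat_vec l m (transp_mat W) \<tau> j * \<theta> j) = (\<Sum>i<m. mat_vec m l W \<theta> i * \<tau> i)"
  unfolding mat_vec_def transp_mat_def sum_distrib_left sum_distrib_right
  by (subst sum.swap) (simp add: mult_ac)

lemma M1:
  assumes "0 < \<mu>" "\<mu> \<le> 1/4"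
  shows "complex_of_real (\<Prod>i<m. phi \<mu> (mat_vec m l W \<theta> i)) =
    (\<integral>\<tau>. (\<Prod>j<l. iexp (2 * pi * mat_vec l m (transp_mat W) \<tau> j * \<theta> j)) \<partial>Q_dist m \<mu>)"
proof -
  have eq: "(\<Prod>j<l. iexp (2 * pi * mat_vec l m (transp_mat W) \<tau> j * \<theta> j))
      = (\<Prod>i<m. iexp ((2 * pi * mat_vec m l W \<theta> i) * \<tau> i))" for \<tau>
  proof -
    have "(\<Prod>j<l. iexp (2 * pi * mat_vec l m (transp_mat W) \<tau> j * \<theta> j))
        = iexp (\<Sum>j<l. 2 * pi * mat_vec l m (transp_mat W) \<tau> j * \<theta> j)"
      by (rule prod_iexp_sum) simp
    also have "(\<Sum>j<l. 2 * pi * mat_vec l m (transp_mat W) \<tau> j * \<theta> j)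
        = 2 * pi * (\<Sum>j<l. mat_vec l m (transp_mat W) \<tau> j * \<theta> j)"
      by (simp add: sum_distrib_left mult_ac)
    also have "\<dots> = (\<Sum>i<m. (2 * pi * mat_vec m l W \<theta> i) * \<tau> i)"
      unfolding key_swap_sum sum_distrib_left by (simp add: mult_ac)
    also have "iexp \<dots> = (\<Prod>i<m. iexp ((2 * pi * mat_vec m l W \<theta> i) * \<tau> i))"
      by (rule prod_iexp_sum[symmetric]) simp
    finally show ?thesis .
  qed
  have "(\<integral>\<tau>. (\<Prod>j<l. iexp (2 * pi * mat_vec l m (transp_mat W) \<tau> j * \<theta> j)) \<partial>Q_dist m \<mu>)
     = (\<integral>\<tau>. (\<Prod>i<m. iexp ((2 * pi * mat_vec m l W \<theta> i) * \<tau> i)) \<partial>Q_dist m \<mu>)"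
    by (simp only: eq)
  also have "\<dots> = (\<Prod>i<m. (\<integral>x. iexp ((2 * pi * mat_vec m l W \<theta> i) * x) \<partial>Q_coord \<mu>))"
    unfolding Q_dist_def
    by (rule expectation_prod_Pi_pmf_complex[where f="\<lambda>i x. iexp ((2 * pi * mat_vec m l W \<theta> i) * x)"])
       (auto simp: finite_set_Q_coord)
  also have "\<dots> = (\<Prod>i<m. complex_of_real (phi \<mu> (mat_vec m l W \<theta> i)))"
  proof (intro prod.cong refl)
    fix i
    have "(\<integral>x. iexp ((2 * pi * mat_vec m l W \<theta> i) * x) \<partial>Q_coord \<mu>)
       = complex_of_real (1 - \<mu> + \<mu> * cos (2 * pi * mat_vec m l W \<theta> i))"
      by (rule Q_coord_char) (use assms in auto)
    thus "(\<integral>x. iexp ((2 * pi * mat_vec m l W \<theta> i) * x) \<partial>Q_coord \<mu>)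
       = complex_of_real (phi \<mu> (mat_vec m l W \<theta> i))" by (simp only: phi_def)
  qed
  finally show ?thesis by simp
qed



lemma M2:
  assumes "0 < \<mu>" "\<mu> \<le> 1/4"
  shows "integrable (gauss_measure l) (\<lambda>\<theta>. \<Prod>i<m. phi \<mu> (mat_vec m l W \<theta> i))"
    "(\<integral>\<theta>. (\<Prod>i<m. phi \<mu> (mat_vec m l W \<theta> i)) \<partial>gauss_measure l)
      = (\<integral>\<tau>. exp (- pi * (\<Sum>j<l. (mat_vec l m (transp_mat W) \<tau> j)\<^sup>2)) \<partial>Q_dist m \<mu>)"
proof -
  define T where "T = Q_dist m \<mu>"
  define S where "S = set_pmf T"
  have S: "finite S" unfolding S_def T_def by (rule finite_set_Q_dist)
  define F where "F = (\<lambda>\<theta> \<tau>. (\<Prod>j<l. iexp (2 * pi * mat_vec l m (transp_mat W) \<tau> j * \<theta> j)))"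
  define H where "H = (\<lambda>\<theta>. \<Sum>\<tau>\<in>S. pmf T \<tau> *\<^sub>R F \<theta> \<tau>)"
  have PH: "complex_of_real (\<Prod>i<m. phi \<mu> (mat_vec m l W \<theta> i)) = H \<theta>" for \<theta>
    unfolding M1[OF assms] H_def F_def T_def[symmetric]
    by (rule integral_measure_pmf[OF S]) (auto simp: S_def)
  have Fint: "integrable (gauss_measure l) (\<lambda>\<theta>. F \<theta> \<tau>)" for \<tau>
    unfolding F_def by (rule gauss_integrable)
  have Hint: "integrable (gauss_measure l) H"
    unfolding H_def using Fint by auto
  have "integrable (gauss_measure l) (\<lambda>\<theta>. Re (H \<theta>))" using Hint by simp
  moreover have "(\<lambda>\<theta>. Re (H \<theta>)) = (\<lambda>\<theta>. \<Prod>i<m. phi \<mu> (mat_vec m l W \<theta> i))"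
    by (rule ext) (simp only: PH[symmetric] Re_complex_of_real)
  ultimately show "integrable (gauss_measure l) (\<lambda>\<theta>. \<Prod>i<m. phi \<mu> (mat_vec m l W \<theta> i))" by simp
  have "complex_of_real (\<integral>\<theta>. (\<Prod>i<m. phi \<mu> (mat_vec m l W \<theta> i)) \<partial>gauss_measure l)
      = (\<integral>\<theta>. H \<theta> \<partial>gauss_measure l)"
    by (subst integral_complex_of_real[symmetric]) (simp only: PH)
  also have "\<dots> = (\<Sum>\<tau>\<in>S. pmf T \<tau> *\<^sub>R (\<integral>\<theta>. F \<theta> \<tau> \<partial>gauss_measure l))"
    unfolding H_def by (subst Bochner_Integration.integral_sum) (auto intro: Fint)
  also have "\<dots> = (\<Sum>\<tau>\<in>S. pmf T \<tau> *\<^sub>R complex_of_real (exp (- pi * (\<Sum>j<l. (mat_vec l m (transp_mat W) \<tau> j)\<^sup>2))))"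
    unfolding F_def by (intro sum.cong refl arg_cong2[where f="(*\<^sub>R)"] gauss_char)
  also have "\<dots> = (\<integral>\<tau>. complex_of_real (exp (- pi * (\<Sum>j<l. (mat_vec l m (transp_mat W) \<tau> j)\<^sup>2))) \<partial>T)"
    by (rule integral_measure_pmf[OF S, symmetric]) (auto simp: S_def)
  also have "\<dots> = complex_of_real (\<integral>\<tau>. exp (- pi * (\<Sum>j<l. (mat_vec l m (transp_mat W) \<tau> j)\<^sup>2)) \<partial>T)"
    by simp
  finally show "(\<integral>\<theta>. (\<Prod>i<m. phi \<mu> (mat_vec m l W \<theta> i)) \<partial>gauss_measure l)
      = (\<integral>\<tau>. exp (- pi * (\<Sum>j<l. (mat_vec l m (transp_mat W) \<tau> j)\<^sup>2)) \<partial>Q_dist m \<mu>)"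
    unfolding T_def using of_real_eq_iff by blast
qed



theorem lemma3p2:
  fixes \<beta> \<mu> t :: real and d l :: nat and W :: "nat \<Rightarrow> nat \<Rightarrow> real"
  assumes "\<beta> > 0" and "0 < \<mu>" and "\<mu> \<le> 1/4" and "t \<ge> 0"
  shows "measure (gauss_measure l) (S_set d l W t) * exp (- 32 * \<mu> * t)
    \<le> measure_pmf.prob (Q_dist (2*d) \<mu>)
         {\<tau>. euclid_norm l (mat_vec l (2*d) (transp_mat W) \<tau>) \<le> \<beta> * sqrt (real l)}
       + exp (- (\<beta>\<^sup>2) * real l)"
proof -
  define m where "m = 2 * d"
  define G where "G = gauss_measure l"
  define P where "P = (\<lambda>\<theta>. \<Prod>i<m. phi \<mu> (mat_vec m l W \<theta> i))"
  define S where "S = S_set d l W t"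
  define T where "T = Q_dist m \<mu>"
  define v where "v = (\<lambda>\<tau>. mat_vec l m (transp_mat W) \<tau>)"
  define E where "E = {\<tau>. euclid_norm l (v \<tau>) \<le> \<beta> * sqrt (real l)}"
  define f where "f = (\<lambda>\<tau>. exp (- pi * (\<Sum>j<l. (v \<tau> j)\<^sup>2)))"
  define c where "c = exp (- (\<beta>\<^sup>2) * real l)"
  have Pint: "integrable G P" unfolding G_def P_def by (rule M2(1)) (use assms in auto)
  have Pnn: "0 \<le> P \<theta>" for \<theta> unfolding P_def
    by (intro prod_nonneg less_imp_le[OF phi_pos]) (use assms in auto)
  interpret G: prob_space G unfolding G_def gauss_measure_def
    by (intro prob_space_PiM prob_space_normal_density) simp
  have low: "measure G S * exp (- 32 * \<mu> * t) \<le> (\<integral>\<theta>. P \<theta> \<partial>G)"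
  proof (cases "S \<in> sets G")
    case True
    have Ssub: "S \<subseteq> space G" unfolding S_def S_set_def G_def by auto
    have "measure G S * exp (- 32 * \<mu> * t) = (\<integral>\<theta>. indicator S \<theta> * exp (- 32 * \<mu> * t) \<partial>G)"
      using Ssub by (simp add: Int_absorb2)
    also have "\<dots> \<le> (\<integral>\<theta>. P \<theta> \<partial>G)"
    proof (rule integral_mono)
      show "integrable G (\<lambda>\<theta>. indicator S \<theta> * exp (- 32 * \<mu> * t))"
        using True by (intro integrable_mult_left integrable_real_indicator) (auto simp: G.emeasure_eq_measure)
      show "integrable G P" by (rule Pint)
      fix \<theta> assume "\<theta> \<in> space G"
      show "indicator S \<theta> * exp (- 32 * \<mu> * t) \<le> P \<theta>"
      proof (cases "\<theta> \<in> S")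
        case True
        hence "torus_norm m (mat_vec m l W \<theta>) \<le> sqrt t"
          unfolding S_def S_set_def m_def by auto
        hence "exp (- 32 * \<mu> * t) \<le> P \<theta>" unfolding P_def
          by (intro torus_lower) (use assms in auto)
        thus ?thesis using True by simp
      next
        case False thus ?thesis using Pnn by simp
      qed
    qed
    finally show ?thesis .
  next
    case False
    hence "measure G S = 0" by (rule measure_notin_sets)
    thus ?thesis using Pnn by (simp add: integral_nonneg)
  qed
  have mid: "(\<integral>\<theta>. P \<theta> \<partial>G) = (\<integral>\<tau>. f \<tau> \<partial>T)"
    unfolding P_def G_def T_def f_def v_def by (rule M2(2)) (use assms in auto)
  have fin: "finite (set_pmf T)" unfolding T_def by (rule finite_set_Q_dist)
  have up: "(\<integral>\<tau>. f \<tau> \<partial>T) \<le> measure_pmf.prob T E + c"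
  proof -
    have "(\<integral>\<tau>. f \<tau> \<partial>T) \<le> (\<integral>\<tau>. indicator E \<tau> + c \<partial>T)"
    proof (rule integral_mono)
      show "integrable (measure_pmf T) f" using fin by (rule integrable_measure_pmf_finite)
      show "integrable (measure_pmf T) (\<lambda>\<tau>. indicator E \<tau> + c)" using fin by (rule integrable_measure_pmf_finite)
      fix \<tau>
      define X where "X = (\<Sum>j<l. (v \<tau> j)\<^sup>2)"
      have X0: "0 \<le> X" unfolding X_def by (intro sum_nonneg) auto
      have c0: "0 \<le> c" unfolding c_def by simp
      show "f \<tau> \<le> indicator E \<tau> + c"
      proof (cases "\<tau> \<in> E")
        case True
        have "f \<tau> \<le> 1" unfolding f_def X_def[symmetric] using X0 by simp
        thus ?thesis using True c0 by simp
      next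
        case False
        hence lt: "\<beta> * sqrt (real l) < sqrt X"
          unfolding E_def euclid_norm_def X_def by simp
        have b0: "0 \<le> \<beta> * sqrt (real l)" using assms by simp
        have "(\<beta> * sqrt (real l))\<^sup>2 < (sqrt X)\<^sup>2"
          using lt b0 by (intro power_strict_mono) auto
        hence "\<beta>\<^sup>2 * real l < X" using X0 by (simp add: power_mult_distrib)
        moreover have "1 * X \<le> pi * X" using X0 pi_gt3 by (intro mult_right_mono) auto
        ultimately have "- pi * X \<le> - (\<beta>\<^sup>2) * real l" by simp
        hence "f \<tau> \<le> c" unfolding f_def c_def X_def[symmetric] by simp
        thus ?thesis using False by simp
      qed
    qed
    also have "\<dots> = measure_pmf.prob T E + c"
      using fin by (subst Bochner_Integration.integral_add) (auto intro: integrable_measure_pmf_finite)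
    finally show ?thesis .
  qed
  have "measure G S * exp (- 32 * \<mu> * t) \<le> measure_pmf.prob T E + c"
    using low mid up by linarith
  thus ?thesis unfolding G_def S_def T_def E_def c_def v_def m_def .
qed


end
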